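(* Let $g\geq 2$, $h$ and $t\ge 1$ be integers with $h>g^t(g-1)$. Then there exists a partition $\mathbb{N}=W_0\cup\cdots\cup W_{h-1}$ (into pairwise disjoint sets) such that each set $W_r$ ($0\le r\le h-1$) contains infinitely many intervals of at least $t$ consecutive integers, and every integer $n\geq h$ belongs to $hA_g(W_0)$, i.e. every integer $n\ge h$ can be written as $n=a_1+\cdots+a_h$ with $a_1,\dots,a_h\in A_g(W_0)$.
   Context: $\mathbb{N}$ denotes the set of all nonnegative integers. For a nonempty $W\subseteq\mathbb{N}$ and an integer $g\ge 2$, $A_g(W)$ is the set of all numbers of the form $\sum_{f\in F}a_f g^f$, where $F$ is a finite nonempty subset of $W$ and $1\le a_f\le g-1$ for each $f\in F$. For a set $B\subseteq \mathbb{N}$, $hB$ denotes the set of all sums $b_1+\cdots+b_h$ with $b_1,\dots,b_h\in B$ (repetitions allowed). *)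

theory Defs
  imports Main
begin

definition A_set :: "nat \<Rightarrow> nat set \<Rightarrow> nat set" where
  "A_set g W = {n. \<exists>F a. finite F \<and> F \<noteq> {} \<and> F \<subseteq> W \<and>
       (\<forall>f\<in>F. 1 \<le> a f \<and> a f \<le> g - 1) \<and> n = (\<Sum>f\<in>F. a f * g ^ f)}"

definition sumset :: "nat \<Rightarrow> nat set \<Rightarrow> nat set" where
  "sumset h B = {n. \<exists>b. (\<forall>i<h. b i \<in> B) \<and> n = (\<Sum>i<h. b i)}"

end

theory Submission
  imports Defs "HOL-Library.Infinite_Set"
begin

lemma A_mono: "X \<subseteq> Y \<Longrightarrow> A_set g X \<subseteq> A_set g Y"
  unfolding A_set_def by blast

lemma A_ext:
  assumes b: "b \<in> insert 0 (A_set g X)" and X: "X \<subseteq> {..<p}" and x: "1 \<le> x" "x \<le> g - 1"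
  shows "b + x * g^p \<in> A_set g (insert p X)"
proof (cases "b = 0")
  case True
  then show ?thesis unfolding A_set_def using x
    by (intro CollectI exI[of _ "{p}"] exI[of _ "\<lambda>_. x"]) auto
next
  case False
  then obtain F a where F: "finite F" "F \<noteq> {}" "F \<subseteq> X" "\<forall>f\<in>F. 1 \<le> a f \<and> a f \<le> g - 1"
      "b = (\<Sum>f\<in>F. a f * g^f)"
    using b unfolding A_set_def by auto
  have pF: "p \<notin> F" using F(3) X by auto
  define a' where "a' = a(p := x)"
  have s1: "(\<Sum>f\<in>F. a' f * g^f) = b" using F(5) pF unfolding a'_def
    by (auto intro!: sum.cong)
  have "(\<Sum>f\<in>insert p F. a' f * g^f) = x * g^p + (\<Sum>f\<in>F. a' f * g^f)"
    using F(1) pF by (simp add: a'_def)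
  then have s2: "b + x * g^p = (\<Sum>f\<in>insert p F. a' f * g^f)" using s1 by simp
  show ?thesis unfolding A_set_def
    apply (intro CollectI exI[of _ "insert p F"] exI[of _ a'])
    using F pF x s2 by (auto simp: a'_def)
qed

lemma distrib:
  fixes h j a g :: nat
  assumes g: "g \<ge> 2"
  shows "j \<le> h*(g-1) \<Longrightarrow> \<exists>x. (\<forall>i<h. x i \<le> g-1) \<and> (\<Sum>i<h. x i) = j \<and>
     (\<forall>i. a \<le> i \<longrightarrow> i < h \<longrightarrow> i < a + j \<longrightarrow> 1 \<le> x i)"
proof (induction h arbitrary: j)
  case 0 then show ?case by (intro exI[of _ "\<lambda>_. 0"]) auto
next
  case (Suc h)
  define m0 where "m0 = j - h*(g-1)"
  define xh where "xh = (if a \<le> h \<and> h < a + j \<and> m0 = 0 then 1 else m0)"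
  have xh_le: "xh \<le> g - 1" using Suc.prems g by (auto simp: xh_def m0_def)
  define j' where "j' = j - xh"
  have xhj: "xh \<le> j" by (auto simp: xh_def m0_def)
  have j'le: "j' \<le> h*(g-1)" by (auto simp: j'_def xh_def m0_def)
  obtain x' where x': "\<forall>i<h. x' i \<le> g-1" "(\<Sum>i<h. x' i) = j'"
     "\<forall>i. a \<le> i \<longrightarrow> i < h \<longrightarrow> i < a + j' \<longrightarrow> 1 \<le> x' i"
    using Suc.IH[OF j'le] by blast
  define x where "x = x'(h := xh)"
  have "(\<Sum>i<Suc h. x i) = (\<Sum>i<h. x i) + xh" by (simp add: x_def)
  also have "(\<Sum>i<h. x i) = (\<Sum>i<h. x' i)" by (intro sum.cong) (auto simp: x_def)
  finally have sx: "(\<Sum>i<Suc h. x i) = j" using x'(2) xhj j'_def by simp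
  have req: "1 \<le> x i" if "a \<le> i" "i < Suc h" "i < a + j" for i
  proof (cases "i = h")
    case True then show ?thesis using that by (auto simp: x_def xh_def)
  next
    case False
    then have ih: "i < h" using that by simp
    have "i < a + j'"
    proof (cases "a \<le> h \<and> h < a + j \<and> m0 = 0")
      case True then show ?thesis using ih by (auto simp: j'_def xh_def)
    next
      case False
      then have "j' = j - m0" by (auto simp: j'_def xh_def)
      show ?thesis
      proof (cases "m0 = 0")
        case True then show ?thesis using \<open>j' = j - m0\<close> that by simp
      next
        case False
        then have "j' = h*(g-1)" using \<open>j' = j - m0\<close> by (simp add: m0_def)
        moreover have "h \<le> h*(g-1)" proof - have g1: "1 \<le> g - 1" using g by arith show ?thesis using mult_le_mono2[OF g1, of h] by simp qed
        ultimately show ?thesis using ih by linarith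
      qed
    qed
    then show ?thesis using x'(3) that ih by (auto simp: x_def)
  qed
  show ?case
    apply (intro exI[of _ x] conjI)
    using x'(1) xh_le sx req by (auto simp: x_def less_Suc_eq)
qed

lemma main:
  fixes W :: "nat set" and g h :: nat
  assumes g: "g \<ge> 2" and h: "h \<ge> 1"
    and coin: "\<And>p. p \<in> W \<Longrightarrow> p \<ge> 1 \<Longrightarrow> g^p + h \<le> h*(g-1)*(\<Sum>q\<in>W\<inter>{..<p}. g^q) + 2"
  shows "a \<le> h \<Longrightarrow> h - a \<le> m \<Longrightarrow> m \<le> h*(g-1)*(\<Sum>q\<in>W\<inter>{..<p}. g^q) \<Longrightarrow>
    \<exists>b. (\<forall>i<h. b i \<in> insert 0 (A_set g (W \<inter> {..<p}))) \<and> (\<forall>i. a \<le> i \<longrightarrow> i < h \<longrightarrow> b i \<noteq> 0)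
        \<and> m = (\<Sum>i<h. b i)"
proof (induction p arbitrary: a m)
  case 0
  then have "m = 0" by simp
  then have "a = h" using 0 by simp
  then show ?case using \<open>m = 0\<close> by (intro exI[of _ "\<lambda>_. 0"]) auto
next
  case (Suc p)
  define V where "V = (\<lambda>p. h*(g-1)*(\<Sum>q\<in>W\<inter>{..<p}. g^q))"
  show ?case
  proof (cases "p \<in> W")
    case False
    have eqW: "W \<inter> {..<Suc p} = W \<inter> {..<p}" using False by (auto simp: less_Suc_eq)
    then show ?thesis using Suc.IH[of a m] Suc.prems by simp
  next
    case True
    define v where "v = g^p"
    define M where "M = h*(g-1)"
    have eqW: "W \<inter> {..<Suc p} = insert p (W \<inter> {..<p})" using True by (auto simp: less_Suc_eq)
    have VS: "V (Suc p) = V p + M * v"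
      by (simp add: V_def eqW M_def v_def distrib_left)
    have v1: "v \<ge> 1" using g by (simp add: v_def)
    have mle: "m \<le> V p + M * v" using Suc.prems VS V_def by simp
    have vV: "v \<le> V p + 1"
    proof (cases "p = 0")
      case True then show ?thesis by (simp add: v_def)
    next
      case False then show ?thesis using coin[OF True] h by (simp add: V_def v_def)
    qed
    define j where "j = (if m \<le> V p then 0 else (m - V p - 1) div v + 1)"
    have jprops: "j \<le> M \<and> j * v \<le> m \<and> m - j*v \<le> V p \<and> (j \<ge> 1 \<longrightarrow> V p + 1 \<le> m - j*v + v)"
    proof (cases "m \<le> V p")
      case True then show ?thesis by (simp add: j_def)
    next
      case False
      define d where "d = m - V p - 1"
      have jd: "j = d div v + 1" using False by (simp add: j_def d_def)
      have dlt: "d < M * v" using mle False by (simp add: d_def)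
      have "d div v < M" using dlt v1 by (simp add: div_less_iff_less_mult)
      moreover have "d div v * v \<le> d" by (simp add: div_times_less_eq_dividend)
      moreover have "d < (d div v + 1) * v"
      proof -
        have "d mod v < v" using v1 by simp
        moreover have "d div v * v + d mod v = d" by simp
        ultimately have "d < d div v * v + v" by linarith
        then show ?thesis by (simp add: algebra_simps)
      qed
      ultimately have f: "d div v < M" "d div v * v \<le> d" "d < d div v * v + v" by simp_all
      have jv: "j * v = d div v * v + v" using jd by (simp add: algebra_simps)
      have "j \<le> M" using f(1) jd by simp
      moreover have "\<And>qv jv d V::nat. qv \<le> d \<Longrightarrow> d < qv + v \<Longrightarrow> jv = qv + v \<Longrightarrow> \<not> m \<le> V \<Longrightarrow> d = m - V - 1
          \<Longrightarrow> v \<le> V + 1 \<Longrightarrow> jv \<le> m \<and> m - jv \<le> V \<and> V + 1 \<le> m - jv + v" by linarith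
      ultimately show ?thesis using f jv False d_def vV by blast
    qed
    define r where "r = m - j*v"
    define a' where "a' = min h (a + j)"
    have ra': "h - a' \<le> r"
    proof (cases "j = 0")
      case True then show ?thesis using Suc.prems by (simp add: r_def a'_def)
    next
      case False
      show ?thesis
      proof (cases "p = 0")
        case True
        then have "V p = 0" "v = 1" by (simp_all add: V_def v_def)
        then have "j = m" using False by (auto simp: j_def split: if_splits)
        then show ?thesis using Suc.prems by (simp add: a'_def r_def)
      next
        case False
        have "v + h \<le> V p + 2" using coin[OF True] False by (simp add: V_def v_def)
        moreover have "a' \<ge> 1" using h \<open>j \<noteq> 0\<close> by (simp add: a'_def)
        moreover have "V p + 1 \<le> r + v" "j*v \<le> m" using jprops \<open>j \<noteq> 0\<close> unfolding r_def by linarith+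
        ultimately show ?thesis by linarith
      qed
    qed
    have a'h: "a' \<le> h" by (simp add: a'_def)
    obtain b' where b': "\<forall>i<h. b' i \<in> insert 0 (A_set g (W \<inter> {..<p}))"
       "\<forall>i. a' \<le> i \<longrightarrow> i < h \<longrightarrow> b' i \<noteq> 0" "r = (\<Sum>i<h. b' i)"
      using Suc.IH[OF a'h ra'] jprops by (auto simp: r_def V_def)
    obtain x where x: "\<forall>i<h. x i \<le> g-1" "(\<Sum>i<h. x i) = j"
       "\<forall>i. a \<le> i \<longrightarrow> i < h \<longrightarrow> i < a + j \<longrightarrow> 1 \<le> x i"
      using distrib[OF g, of j h a] jprops by (auto simp: M_def)
    define b where "b = (\<lambda>i. b' i + x i * v)"
    have mem: "b i \<in> insert 0 (A_set g (W \<inter> {..<Suc p}))" if "i < h" for i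
    proof (cases "x i = 0")
      case True
      have sub: "A_set g (W \<inter> {..<p}) \<subseteq> A_set g (W \<inter> {..<Suc p})" by (rule A_mono) auto
      then show ?thesis using b'(1) that True by (auto simp: b_def)
    next
      case False
      have "b i \<in> A_set g (insert p (W \<inter> {..<p}))" unfolding b_def v_def
        using A_ext[of "b' i" g "W \<inter> {..<p}" p "x i"] b'(1) x(1) that False by auto
      then show ?thesis using eqW by simp
    qed
    have nz: "b i \<noteq> 0" if "a \<le> i" "i < h" for i
    proof (cases "i < a + j")
      case True
      then have "x i \<ge> 1" using x(3) that by auto
      then have "x i * v \<ge> 1" using v1 by simp
      then show ?thesis by (simp add: b_def)
    next
      case False
      then have "a' \<le> i" by (simp add: a'_def)
      then show ?thesis using b'(2) that by (simp add: b_def)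
    qed
    have "(\<Sum>i<h. b i) = r + j * v"
      by (simp add: b_def sum.distrib b'(3) x(2) sum_distrib_right[symmetric])
    also have "\<dots> = m" using jprops by (simp add: r_def)
    finally show ?thesis using mem nz by (intro exI[of _ b]) auto
  qed
qed

lemma pw: "(g::nat) \<ge> 1 \<Longrightarrow> (g-1)*g^n + g^n = g^(n+1)"
proof -
  assume "g \<ge> 1"
  then have "(g-1)*g^n + g^n = ((g-1)+1)*g^n" by (simp add: algebra_simps)
  also have "\<dots> = g * g^n" using \<open>g \<ge> 1\<close> by simp
  finally show ?thesis by simp
qed

lemma geo: "(g::nat) \<ge> 1 \<Longrightarrow> (g - 1) * (\<Sum>q\<in>{c..c+t}. g^q) + g^c = g^(c+t+1)"
proof (induction t)
  case 0 then show ?case using pw[of g c] by simp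
next
  case (Suc t)
  have "{c..c + Suc t} = insert (c + Suc t) {c..c+t}" by auto
  then have "(\<Sum>q\<in>{c..c+Suc t}. g^q) = g^(c+Suc t) + (\<Sum>q\<in>{c..c+t}. g^q)" by simp
  then have "(g - 1) * (\<Sum>q\<in>{c..c+Suc t}. g^q) + g^c = (g-1)*g^(c+Suc t) + ((g - 1) * (\<Sum>q\<in>{c..c+t}. g^q) + g^c)"
    by (simp add: algebra_simps)
  also have "\<dots> = (g-1)*g^(c+Suc t) + g^(c+Suc t)" using Suc by simp
  also have "\<dots> = g^(c + Suc t + 1)" using pw[of g "c + Suc t"] Suc.prems by simp
  finally show ?case by simp
qed

lemma ineq1:
  fixes g h y :: nat
  assumes "g \<ge> 2" "h \<ge> 2" "y \<ge> 1"
  shows "g*y + h \<le> h*(g-1)*y + 2"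
proof -
  define c where "c = int h * (int g - 1) - int g"
  have "int h * (int g - 2) \<ge> 1 * (int g - 2)" using assms by (intro mult_right_mono) auto
  then have c: "c \<ge> int h - 2" by (simp add: algebra_simps c_def)
  have c0: "c \<ge> 0" using c assms by simp
  have "c * int y \<ge> c * 1" using c0 assms by (intro mult_left_mono) auto
  then have "int g * int y + int h \<le> (c + int g) * int y + 2"
    using c by (simp add: algebra_simps)
  also have "(c + int g) = int (h*(g-1))" using assms by (simp add: c_def of_nat_diff)
  finally have "int (g * y + h) \<le> int (h*(g-1)*y + 2)" by simp
  then show ?thesis by linarith
qed

lemma ineq2:
  fixes s G g h :: nat
  assumes "s \<ge> 1" "G \<ge> 1" "g \<ge> 2" "h \<ge> G + 1"
  shows "s*G*G*g + h \<le> h*(s*G*g - s) + 2"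
proof -
  define X where "X = int s * int G * int g - int s - 1"
  have "int s * int G * int g \<ge> int s * 1 * 2"
    using assms by (intro mult_mono) auto
  then have X0: "X \<ge> 0" using assms by (simp add: X_def)
  have A: "int h * X \<ge> (int G + 1) * X" using X0 assms by (intro mult_right_mono) auto
  have B: "(int s - 1) * (int G - 1) \<ge> 0" using assms by simp
  have C: "int s * int G * (int g - 2) \<ge> 0" using assms by simp
  have D: "(int G + 1) * X = int s * int G * int G * int g + int s * int G * int g - int s * int G - int s - int G - 1"
    unfolding X_def by (simp add: algebra_simps)
  have E: "(int s - 1) * (int G - 1) = int s * int G - int s - int G + 1" by (simp add: algebra_simps)
  have F: "int s * int G * (int g - 2) = int s * int G * int g - 2 * int s * int G" by (simp add: algebra_simps)
  have "int s * int G * int G * int g + int h \<le> int h * (X + 1) + 2"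
    using A B C D E F by (simp add: algebra_simps)
  moreover have "X + 1 = int (s*G*g - s)"
  proof -
    have "s * G * g \<ge> s * 1 * 1" using assms by (intro mult_mono) auto
    then show ?thesis by (simp add: X_def of_nat_diff)
  qed
  ultimately have "int (s*G*G*g + h) \<le> int (h*(s*G*g - s) + 2)" by simp
  then show ?thesis by linarith
qed

lemma coinW:
  fixes g h t p :: nat
  assumes g: "g \<ge> 2" and t: "t \<ge> 1" and h: "h \<ge> g^t + 1"
    and p: "p mod (2*t+1) \<le> t" "p \<ge> 1"
  shows "g^p + h \<le> h*(g-1)*(\<Sum>q\<in>{q. q mod (2*t+1) \<le> t}\<inter>{..<p}. g^q) + 2"
proof -
  define P where "P = 2*t+1"
  define W0 where "W0 = {q::nat. q mod P \<le> t}"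
  define S where "S = (\<Sum>q\<in>W0\<inter>{..<p}. g^q)"
  have "g^t \<ge> 1" using g by simp
  then have h2: "h \<ge> 2" using h by linarith
  show ?thesis
  proof (cases "(p-1) mod P \<le> t")
    case True
    have "p - 1 \<in> W0 \<inter> {..<p}" using True p by (auto simp: W0_def)
    then have "g^(p-1) \<le> S" unfolding S_def by (intro member_le_sum) auto
    then have "h*(g-1)*g^(p-1) \<le> h*(g-1)*S" by simp
    moreover have "g*g^(p-1) + h \<le> h*(g-1)*g^(p-1) + 2" using ineq1[OF g h2, of "g^(p-1)"] g by simp
    moreover have "g*g^(p-1) = g^p" using p by (cases p) auto
    ultimately show ?thesis unfolding S_def W0_def P_def by linarith
  next
    case False
    obtain p' where pp: "p = Suc p'" using p by (cases p) auto
    have pm: "p mod P = 0"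
      using False p(1) unfolding pp P_def by (auto simp: mod_Suc split: if_splits)
    define k where "k = p div P"
    have pk: "p = P*k" using pm div_mult_mod_eq[of p P] by (simp add: k_def mult.commute)
    then have k1: "k \<ge> 1" using p by (cases k) auto
    define c where "c = P*(k-1)"
    have pc: "p = c + 2*t + 1" using pk k1 unfolding c_def P_def
      by (cases k) (auto simp: algebra_simps)
    have sub: "{c..c+t} \<subseteq> W0 \<inter> {..<p}"
    proof
      fix q assume q: "q \<in> {c..c+t}"
      define i where "i = q - c"
      have i: "q = c + i" "i \<le> t" using q by (auto simp: i_def)
      have iP: "i < P" using i(2) by (simp add: P_def)
      have "q mod P = i" using i(1) iP unfolding c_def by simp
      then show "q \<in> W0 \<inter> {..<p}" using i pc by (auto simp: W0_def)
    qed
    have "(\<Sum>q\<in>{c..c+t}. g^q) \<le> S" unfolding S_def by (rule sum_mono2) (use sub in auto)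
    then have "(g-1)*(\<Sum>q\<in>{c..c+t}. g^q) \<le> (g-1)*S" by simp
    moreover have "(g - 1) * (\<Sum>q\<in>{c..c+t}. g^q) + g^c = g^(c+t+1)" using geo[of g c t] g by simp
    ultimately have "g^(c+t+1) - g^c \<le> (g-1)*S" by linarith
    then have "h*(g^(c+t+1) - g^c) \<le> h*(g-1)*S" by (simp add: mult.assoc)
    moreover have "g^c*g^t*g^t*g + h \<le> h*(g^c*g^t*g - g^c) + 2"
      by (rule ineq2) (use g h in auto)
    moreover have "g^c*g^t*g^t*g = g^p" using pc by (simp add: power_add power_mult algebra_simps power2_eq_square)
    moreover have "h*(g^c*g^t*g - g^c) = h*(g^(c+t+1) - g^c)" by (simp add: power_add algebra_simps)
    ultimately show ?thesis unfolding S_def W0_def P_def by linarith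
  qed
qed

theorem theorem2:
  fixes g h t :: nat
  assumes "g \<ge> 2" and "t \<ge> 1" and "h > g ^ t * (g - 1)"
  shows "\<exists>W :: nat \<Rightarrow> nat set.
     (\<Union>r<h. W r) = UNIV \<and>
     (\<forall>r<h. \<forall>s<h. r \<noteq> s \<longrightarrow> W r \<inter> W s = {}) \<and>
     (\<forall>r<h. infinite {m. {m..<m + t} \<subseteq> W r}) \<and>
     (\<forall>n\<ge>h. n \<in> sumset h (A_set g (W 0)))"
proof -
  note g = assms(1) and t = assms(2)
  define P where "P = 2*t+1"
  define f where "f = (\<lambda>p. if p mod P \<le> t then 0 else Suc ((p div P) mod (h-1)))"
  define W where "W = (\<lambda>r. {p. f p = r})"
  have G2: "g^t \<ge> 2"
  proof -
    have "g^1 \<le> g^t" using power_increasing[of 1 t g] t g by simp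
    then show ?thesis using g by simp
  qed
  have "g^t * (g-1) \<ge> g^t * 1" using g by (intro mult_le_mono2) linarith
  then have hG: "h \<ge> g^t + 1" using assms(3) by linarith
  then have h3: "h \<ge> 3" using G2 by simp
  have W0: "W 0 = {p. p mod (2*t+1) \<le> t}" by (auto simp: W_def f_def P_def)
  have P1: "P \<ge> 1" by (simp add: P_def)
  have c1: "(\<Union>r<h. W r) = UNIV"
  proof -
    have "f p < h" for p
    proof -
      have "(p div P) mod (h-1) < h - 1" using h3 by simp
      then show ?thesis using h3 unfolding f_def by (cases "p mod P \<le> t") (simp_all only: if_True if_False; linarith)+
    qed
    then show ?thesis by (auto simp: W_def)
  qed
  have c2: "\<forall>r<h. \<forall>s<h. r \<noteq> s \<longrightarrow> W r \<inter> W s = {}" by (auto simp: W_def)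
  have c3: "infinite {m. {m..<m + t} \<subseteq> W r}" if r: "r < h" for r
    unfolding infinite_nat_iff_unbounded_le
  proof
    fix N
    show "\<exists>n\<ge>N. n \<in> {m. {m..<m + t} \<subseteq> W r}"
    proof (cases "r = 0")
      case True
      have "{P*N..<P*N + t} \<subseteq> W r"
      proof
        fix q assume q: "q \<in> {P*N..<P*N + t}"
        define i where "i = q - P*N"
        have i: "q = P*N + i" "i < t" using q by (auto simp: i_def)
        have "i < P" using i(2) by (simp add: P_def)
        then have "q mod P = i" using i(1) by simp
        then show "q \<in> W r" using True i(2) by (simp add: W_def f_def)
      qed
      moreover have "P*N \<ge> N" using mult_le_mono1[OF P1, of N] by linarith
      ultimately show ?thesis by blast
    next
      case False
      define K where "K = (h-1)*N + (r-1)"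
      define n where "n = P*K + t + 1"
      have "{n..<n + t} \<subseteq> W r"
      proof
        fix q assume q: "q \<in> {n..<n + t}"
        define i where "i = q - n"
        have i: "q = P*K + (t+1+i)" "i < t" using q by (auto simp: i_def n_def)
        have iP: "t+1+i < P" using i(2) by (simp add: P_def)
        then have "q mod P = t+1+i" using i(1) by simp
        moreover have "q div P = K"
        proof -
          have "q = (t+1+i) + P*K" using i(1) by simp
          then have "q div P = K + (t+1+i) div P" using P1 div_mult_self2[of P "t+1+i" K] by simp
          then show ?thesis using iP by simp
        qed
        moreover have "K mod (h-1) = r - 1"
        proof -
          have "K = (r-1) + (h-1)*N" by (simp add: K_def)
          then have "K mod (h-1) = (r-1) mod (h-1)" by simp
          moreover have "r - 1 < h - 1" using r False by linarith
          ultimately show ?thesis by simp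
        qed
        ultimately show "q \<in> W r" using False by (simp add: W_def f_def)
      qed
      moreover have "n \<ge> N"
      proof -
        have h1: "1 \<le> h-1" using h3 by linarith
        have "1*N \<le> (h-1)*N" using mult_le_mono1[OF h1, of N] .
        then have "K \<ge> N" unfolding K_def by linarith
        moreover have "1*K \<le> P*K" using mult_le_mono1[OF P1, of K] .
        ultimately show ?thesis unfolding n_def by linarith
      qed
      ultimately show ?thesis by blast
    qed
  qed
  have c4: "n \<in> sumset h (A_set g (W 0))" if n: "n \<ge> h" for n
  proof -
    define W0 where "W0 = {p::nat. p mod (2*t+1) \<le> t}"
    have coin: "\<And>p. p \<in> W0 \<Longrightarrow> p \<ge> 1 \<Longrightarrow> g^p + h \<le> h*(g-1)*(\<Sum>q\<in>W0\<inter>{..<p}. g^q) + 2"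
      unfolding W0_def using coinW[OF g t hG] by simp
    define q where "q = (2*t+1)*n"
    have "q mod (2*t+1) = 0" unfolding q_def by (rule mod_mult_self1_is_0)
    then have qW: "q \<in> W0 \<inter> {..<Suc q}" by (simp add: W0_def)
    have "n \<le> q" by (simp add: q_def)
    also have "q < 2^q" by (rule less_exp)
    also have "2^q \<le> g^q" using g by (simp add: power_mono)
    also have "g^q \<le> (\<Sum>q\<in>W0\<inter>{..<Suc q}. g^q)" using qW by (intro member_le_sum) auto
    also have "\<dots> \<le> h*(g-1)*(\<Sum>q\<in>W0\<inter>{..<Suc q}. g^q)"
    proof -
      have "h*(g-1) \<ge> 1" using h3 g by simp
      then show ?thesis by simp
    qed
    finally have nV: "n \<le> h*(g-1)*(\<Sum>q\<in>W0\<inter>{..<Suc q}. g^q)" by simp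
    obtain b where b: "\<forall>i<h. b i \<in> insert 0 (A_set g (W0 \<inter> {..<Suc q}))"
      "\<forall>i. 0 \<le> i \<longrightarrow> i < h \<longrightarrow> b i \<noteq> 0" "n = (\<Sum>i<h. b i)"
    proof -
      have "\<exists>b. (\<forall>i<h. b i \<in> insert 0 (A_set g (W0 \<inter> {..<Suc q}))) \<and>
        (\<forall>i. 0 \<le> i \<longrightarrow> i < h \<longrightarrow> b i \<noteq> 0) \<and> n = (\<Sum>i<h. b i)"
        by (rule main[OF g _ coin]) (use h3 n nV in auto)
      then show ?thesis using that by blast
    qed
    have sub: "A_set g (W0 \<inter> {..<Suc q}) \<subseteq> A_set g (W 0)" using W0 W0_def by (intro A_mono) auto
    have "\<forall>i<h. b i \<in> A_set g (W 0)" using b(1,2) sub by auto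
    then show ?thesis unfolding sumset_def using b(3) by blast
  qed
  show ?thesis
    apply (intro exI[of _ W] conjI)
    using c1 c2 c3 c4 by auto
qed

end
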